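(* Let $X$ be a Fréchet space, $(T(t))_{t\geqslant0}$ an exponentially equicontinuous $C_0$-semigroup on $X$, and let $\Gamma$ be a fundamental system of seminorms for $X$ for which there exist $\omega\in\mathbb{R}$ and $M\geqslant1$ with $q(T(t)x)\leqslant Me^{\omega t}q(x)$ for all $q\in\Gamma$, $t\geqslant0$, $x\in X$. Then for every $t_0>0$, \[\omega_{0,\Gamma}(T)=\inf_{t>0}\tfrac{1}{t}\log\|T(t)\|_\Gamma=\lim_{t\to\infty}\tfrac1t\log\|T(t)\|_\Gamma=\tfrac{1}{t_0}\log\Big(\lim_{n\to\infty}\|T(t_0)^n\|_\Gamma^{1/n}\Big).\]
   Context: A Fréchet space is a complete metrizable locally convex space; a fundamental system of seminorms is a set of continuous seminorms generating the topology. A $C_0$-semigroup is a family $(T(t))_{t\geqslant0}$ of continuous linear operators on $X$ with $T(0)=\mathrm{id}_X$, $T(t+s)=T(t)T(s)$, and $t\mapsto T(t)x$ continuous for every $x$; it is exponentially equicontinuous if for some $\omega\in\mathbb{R}$ the family $\{e^{-\omega t}T(t)\}_{t\geqslant0}$ is equicontinuous. For $S\in L(X)$ put $\|S\|_\Gamma=\sup_{q\in\Gamma}\sup_{x\in X,\,q(x)\leqslant1}q(Sx)$. Define \[\omega_{0,\Gamma}(T)=\inf\{\omega\in\mathbb{R}: \exists M\geqslant1\ \forall q\in\Gamma,\,t\geqslant0,\,x\in X:\ q(T(t)x)\leqslant Me^{\omega t}q(x)\}.\] *)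

theory Defs
  imports "HOL-Analysis.Analysis"
begin

text \<open>A Frechet space is modelled as a real vector space 'a equipped with a countable
  separating family of seminorms p :: nat => 'a => real generating its (metrizable, locally
  convex) topology, such that the space is sequentially complete for this family.\<close>

definition seminorm :: "('a::real_vector \<Rightarrow> real) \<Rightarrow> bool" where
  "seminorm q \<longleftrightarrow> (\<forall>x. 0 \<le> q x) \<and> (\<forall>c x. q (c *\<^sub>R x) = \<bar>c\<bar> * q x)
     \<and> (\<forall>x y. q (x + y) \<le> q x + q y)"

definition frechet :: "(nat \<Rightarrow> 'a::real_vector \<Rightarrow> real) \<Rightarrow> bool" where
  "frechet p \<longleftrightarrow> (\<forall>n. seminorm (p n)) \<and> (\<forall>x. (\<forall>n. p n x = 0) \<longrightarrow> x = 0)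
     \<and> (\<forall>X :: nat \<Rightarrow> 'a.
          (\<forall>n e. e > 0 \<longrightarrow> (\<exists>N. \<forall>i\<ge>N. \<forall>j\<ge>N. p n (X i - X j) < e))
          \<longrightarrow> (\<exists>x. \<forall>n. (\<lambda>i. p n (X i - x)) \<longlonglongrightarrow> 0))"

definition continuous_seminorm :: "(nat \<Rightarrow> 'a::real_vector \<Rightarrow> real) \<Rightarrow> ('a \<Rightarrow> real) \<Rightarrow> bool" where
  "continuous_seminorm p q \<longleftrightarrow> seminorm q \<and> (\<exists>C m. \<forall>x. q x \<le> C * (\<Sum>k\<le>m. p k x))"

definition fundamental_system :: "(nat \<Rightarrow> 'a::real_vector \<Rightarrow> real) \<Rightarrow> ('a \<Rightarrow> real) set \<Rightarrow> bool" where
  "fundamental_system p \<Gamma> \<longleftrightarrow> (\<forall>q\<in>\<Gamma>. continuous_seminorm p q)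
     \<and> (\<forall>n. \<exists>F C. finite F \<and> F \<subseteq> \<Gamma> \<and> (\<forall>x. p n x \<le> C * (\<Sum>q\<in>F. q x)))"

definition continuous_linear :: "(nat \<Rightarrow> 'a::real_vector \<Rightarrow> real) \<Rightarrow> ('a \<Rightarrow> 'a) \<Rightarrow> bool" where
  "continuous_linear p S \<longleftrightarrow> linear S \<and> (\<forall>n. \<exists>C m. \<forall>x. p n (S x) \<le> C * (\<Sum>k\<le>m. p k x))"

definition C0_semigroup :: "(nat \<Rightarrow> 'a::real_vector \<Rightarrow> real) \<Rightarrow> (real \<Rightarrow> 'a \<Rightarrow> 'a) \<Rightarrow> bool" where
  "C0_semigroup p T \<longleftrightarrow> (\<forall>t\<ge>0. continuous_linear p (T t)) \<and> T 0 = id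
     \<and> (\<forall>t s. t \<ge> 0 \<longrightarrow> s \<ge> 0 \<longrightarrow> T (t + s) = T t \<circ> T s)
     \<and> (\<forall>x s n. s \<ge> 0 \<longrightarrow> ((\<lambda>t. p n (T t x - T s x)) \<longlongrightarrow> 0) (at s within {0..}))"

definition exp_equicontinuous :: "(nat \<Rightarrow> 'a::real_vector \<Rightarrow> real) \<Rightarrow> (real \<Rightarrow> 'a \<Rightarrow> 'a) \<Rightarrow> bool" where
  "exp_equicontinuous p T \<longleftrightarrow> (\<exists>\<omega>::real. \<forall>n. \<exists>C m. \<forall>t\<ge>0. \<forall>x.
      p n (exp (- \<omega> * t) *\<^sub>R T t x) \<le> C * (\<Sum>k\<le>m. p k x))"

text \<open>The Gamma-operator norm, with value in the extended reals (it may be infinite);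
  0 is included so that the supremum of nonnegative quantities over an empty index is 0.\<close>
definition opnormG :: "('a \<Rightarrow> real) set \<Rightarrow> ('a \<Rightarrow> 'a) \<Rightarrow> ereal" where
  "opnormG \<Gamma> S = Sup (insert 0 {ereal (q (S x)) | q x. q \<in> \<Gamma> \<and> q x \<le> 1})"

definition growth_bound :: "('a \<Rightarrow> real) set \<Rightarrow> (real \<Rightarrow> 'a \<Rightarrow> 'a) \<Rightarrow> ereal" where
  "growth_bound \<Gamma> T = Inf {ereal \<omega> | \<omega>. \<exists>M\<ge>1. \<forall>q\<in>\<Gamma>. \<forall>t\<ge>0. \<forall>x.
      q (T t x) \<le> M * exp (\<omega> * t) * q x}"

definition eln :: "ereal \<Rightarrow> ereal" where
  "eln x = (if x \<le> 0 then - \<infinity> else if x = \<infinity> then \<infinity> else ereal (ln (real_of_ereal x)))"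

definition eroot :: "nat \<Rightarrow> ereal \<Rightarrow> ereal" where
  "eroot n x = (if x = \<infinity> then \<infinity> else ereal (root n (real_of_ereal x)))"

end

theory Submission
  imports Defs
begin

lemma opnormG_ge0: "0 \<le> opnormG \<Gamma> S"
  unfolding opnormG_def by (rule Sup_upper) simp

lemma opnormG_le:
  assumes "K \<ge> 0" "\<forall>q\<in>\<Gamma>. \<forall>x. q (S x) \<le> K * q x"
  shows "opnormG \<Gamma> S \<le> ereal K"
  unfolding opnormG_def
proof (rule Sup_least)
  fix y assume "y \<in> insert 0 {ereal (q (S x)) |q x. q \<in> \<Gamma> \<and> q x \<le> 1}"
  then show "y \<le> ereal K"
  proof
    assume "y = 0" then show ?thesis using assms by simp
  next
    assume "y \<in> {ereal (q (S x)) |q x. q \<in> \<Gamma> \<and> q x \<le> 1}"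
    then obtain q x where "y = ereal (q (S x))" "q \<in> \<Gamma>" "q x \<le> 1" by blast
    moreover have "K * q x \<le> K" using assms(1) \<open>q x \<le> 1\<close> by (simp add: mult_left_le)
    ultimately have "q (S x) \<le> K" using assms(2) by (meson order_trans)
    then show ?thesis using \<open>y = ereal (q (S x))\<close> by simp
  qed
qed

lemma opnormG_apply:
  assumes lin: "linear S" and eq: "opnormG \<Gamma> S = ereal n" and q: "q \<in> \<Gamma>" and sq: "seminorm q"
  shows "q (S x) \<le> n * q x"
proof -
  have up: "q (S y) \<le> n" if "q y \<le> 1" for y
  proof -
    have "ereal (q (S y)) \<le> opnormG \<Gamma> S"
      unfolding opnormG_def by (rule Sup_upper) (use that q in blast)
    then show ?thesis using eq by simp
  qed
  have sc: "S (c *\<^sub>R y) = c *\<^sub>R S y" for c y using lin by (simp add: linear_scale)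
  have n0: "0 \<le> n" using opnormG_ge0[of \<Gamma> S] eq by simp
  have qs: "q (c *\<^sub>R y) = \<bar>c\<bar> * q y" "0 \<le> q y" for c y using sq unfolding seminorm_def by auto
  show ?thesis
  proof (cases "q x > 0")
    case True
    have "q ((1 / q x) *\<^sub>R x) = 1" using True qs(1)[of "1/q x" x] by simp
    then have "q (S ((1 / q x) *\<^sub>R x)) \<le> n" using up by simp
    then have "(1 / q x) * q (S x) \<le> n" using sc qs(1) True by simp
    then show ?thesis using True by (simp add: field_simps)
  next
    case False
    then have qx: "q x = 0" using qs(2)[of x] by simp
    show ?thesis
    proof (rule ccontr)
      assume "\<not> ?thesis"
      then have pos: "q (S x) > 0" using qx by simp
      define c where "c = (n + 1) / q (S x)"
      have "q (c *\<^sub>R x) \<le> 1" using qs(1) qx by simp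
      then have "q (S (c *\<^sub>R x)) \<le> n" by (rule up)
      moreover have "q (S (c *\<^sub>R x)) = n + 1" using sc qs(1) pos n0 unfolding c_def by simp
      ultimately show False by simp
    qed
  qed
qed

lemma main_part:
  fixes T :: "real \<Rightarrow> 'a::real_vector \<Rightarrow> 'a"
    and \<Gamma> :: "('a \<Rightarrow> real) set"
    and \<omega> M t0 :: real
  assumes lin: "\<And>t. t \<ge> 0 \<Longrightarrow> linear (T t)"
    and semi: "\<And>t s. t \<ge> 0 \<Longrightarrow> s \<ge> 0 \<Longrightarrow> T (t + s) = T t \<circ> T s"
    and T0: "T 0 = id"
    and sn: "\<And>q. q \<in> \<Gamma> \<Longrightarrow> seminorm q"
    and M1: "M \<ge> 1"
    and bd: "\<forall>q\<in>\<Gamma>. \<forall>t\<ge>0. \<forall>x. q (T t x) \<le> M * exp (\<omega> * t) * q x"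
    and t0: "t0 > 0"
  shows "growth_bound \<Gamma> T = (INF t\<in>{0<..}. ereal (1 / t) * eln (opnormG \<Gamma> (T t)))
    \<and> ((\<lambda>t. ereal (1 / t) * eln (opnormG \<Gamma> (T t))) \<longlongrightarrow> growth_bound \<Gamma> T) at_top
    \<and> (\<exists>L. (\<lambda>n. eroot n (opnormG \<Gamma> (T t0 ^^ n))) \<longlonglongrightarrow> L
           \<and> growth_bound \<Gamma> T = ereal (1 / t0) * eln L)"
proof -
  define N where "N t = real_of_ereal (opnormG \<Gamma> (T t))" for t
  have Neq: "opnormG \<Gamma> (T t) = ereal (N t)" and N0: "0 \<le> N t" and NM: "N t \<le> M * exp (\<omega> * t)"
    if "t \<ge> 0" for t
  proof -
    have le: "opnormG \<Gamma> (T t) \<le> ereal (M * exp (\<omega> * t))"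
      using bd that M1 by (intro opnormG_le) auto
    have ge: "0 \<le> opnormG \<Gamma> (T t)" by (rule opnormG_ge0)
    from le ge show "opnormG \<Gamma> (T t) = ereal (N t)" unfolding N_def by (cases "opnormG \<Gamma> (T t)") auto
    with le ge show "0 \<le> N t" "N t \<le> M * exp (\<omega> * t)" by auto
  qed
  have NA: "q (T t x) \<le> N t * q x" if "t \<ge> 0" "q \<in> \<Gamma>" for t q x
    by (rule opnormG_apply[OF lin[OF that(1)] Neq[OF that(1)] that(2) sn[OF that(2)]])
  have NC: "N t \<le> K" if "t \<ge> 0" "K \<ge> 0" "\<forall>q\<in>\<Gamma>. \<forall>x. q (T t x) \<le> K * q x" for t K
    using opnormG_le[OF that(2,3)] Neq[OF that(1)] by simp
  have NB: "N (s + t) \<le> N s * N t" if "s \<ge> 0" "t \<ge> 0" for s t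
  proof (rule NC)
    show "0 \<le> s + t" "0 \<le> N s * N t" using that N0 by auto
    show "\<forall>q\<in>\<Gamma>. \<forall>x. q (T (s + t) x) \<le> N s * N t * q x"
    proof (intro ballI allI)
      fix q x assume q: "q \<in> \<Gamma>"
      have "q (T (s + t) x) = q (T s (T t x))" using semi[OF that] by simp
      also have "\<dots> \<le> N s * q (T t x)" using NA[OF that(1) q] .
      also have "\<dots> \<le> N s * (N t * q x)" using NA[OF that(2) q] N0[OF that(1)] by (rule mult_left_mono)
      finally show "q (T (s + t) x) \<le> N s * N t * q x" by simp
    qed
  qed
  have Npow: "N (real n * t1 + r) \<le> N t1 ^ n * N r" if "t1 \<ge> 0" "r \<ge> 0" for n t1 r
  proof (induction n)
    case 0 then show ?case by simp
  next
    case (Suc n)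
    have "N (real (Suc n) * t1 + r) = N (t1 + (real n * t1 + r))" by (simp add: algebra_simps)
    also have "\<dots> \<le> N t1 * N (real n * t1 + r)" using NB that by simp
    also have "\<dots> \<le> N t1 * (N t1 ^ n * N r)" using Suc N0 that by (simp add: mult_left_mono)
    finally show ?case by simp
  qed
  define F where "F t = ereal (1 / t) * eln (opnormG \<Gamma> (T t))" for t
  have Feq: "F t = (if N t = 0 then - \<infinity> else ereal (ln (N t) / t))" if "t > 0" for t
    using that Neq[of t] N0[of t] unfolding F_def eln_def by auto
  have Fbound: "F t \<le> ereal (ln K / t + c)" if "t > 0" "K > 0" "N t \<le> K * exp (c * t)" for t K c
  proof (cases "N t = 0")
    case True then show ?thesis using Feq that by simp
  next
    case False
    then have "N t > 0" using N0[of t] that by simp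
    then have "ln (N t) \<le> ln (K * exp (c * t))" using that by simp
    also have "\<dots> = ln K + c * t" using that by (simp add: ln_mult)
    finally have "ln (N t) / t \<le> ln K / t + c" using that by (simp add: field_simps)
    then show ?thesis using Feq that False by simp
  qed
  define W where "W = (INF t\<in>{0<..}. F t)"
  have WF: "W \<le> F t" if "t > 0" for t unfolding W_def by (rule INF_lower) (use that in simp)
  have LemL: "W \<le> ereal c" if K: "K > 0" and hb: "\<forall>t\<ge>0. N t \<le> K * exp (c * t)" for K c
  proof (rule ccontr)
    assume "\<not> W \<le> ereal c"
    then obtain d where d: "ereal c < ereal d" "ereal d < W" using ereal_dense2 by (metis not_le)
    define t where "t = \<bar>ln K\<bar> / (d - c) + 1"
    have dc: "d - c > 0" using d by simp
    have tpos: "t > 0" unfolding t_def using dc by (simp add: add_nonneg_pos)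
    have "ln K / t < d - c"
    proof -
      have "ln K \<le> \<bar>ln K\<bar>" by simp
      also have "\<bar>ln K\<bar> < (d - c) * t"
      proof -
        have "(d - c) * t = \<bar>ln K\<bar> + (d - c)" unfolding t_def using dc by (simp add: distrib_left)
        then show ?thesis using dc by linarith
      qed
      finally show ?thesis using tpos by (simp add: field_simps)
    qed
    then have lt: "ereal (ln K / t + c) < ereal d" by simp
    have "N t \<le> K * exp (c * t)" using hb tpos by simp
    then have "F t \<le> ereal (ln K / t + c)" by (rule Fbound[OF tpos K])
    then have "F t < ereal d" using lt by (rule order_le_less_trans)
    with WF[OF tpos] d show False by simp
  qed
  have LemU: "\<exists>K>0. \<forall>t\<ge>0. N t \<le> K * exp (c * t)" if Wc: "W < ereal c" for c
  proof -
    obtain t1 where t1: "t1 > 0" "F t1 < ereal c" using Wc unfolding W_def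
      by (metis INF_less_iff greaterThan_iff)
    have Nt1: "N t1 \<le> exp (c * t1)"
    proof (cases "N t1 = 0")
      case True then show ?thesis by simp
    next
      case False
      then have pos: "N t1 > 0" using N0[of t1] t1 by simp
      have "ln (N t1) / t1 < c" using t1 Feq False by simp
      then have "ln (N t1) < c * t1" using t1 by (simp add: field_simps)
      then show ?thesis using pos by (metis exp_ln less_imp_le exp_less_mono)
    qed
    define K where "K = M * exp (\<bar>\<omega>\<bar> * t1) * exp (\<bar>c\<bar> * t1)"
    have Kpos: "K > 0" unfolding K_def using M1 by simp
    have "N t \<le> K * exp (c * t)" if t: "t \<ge> 0" for t
    proof -
      define n where "n = nat \<lfloor>t / t1\<rfloor>"
      define r where "r = t - real n * t1"
      have fl: "real n = of_int \<lfloor>t / t1\<rfloor>" unfolding n_def using t t1 by simp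
      have "real n \<le> t / t1" "t / t1 < real n + 1" using fl by linarith+
      then have r0: "r \<ge> 0" and r1: "r < t1" unfolding r_def using t1 by (simp_all add: field_simps)
      have tt: "t = real n * t1 + r" unfolding r_def by simp
      have "N t \<le> N t1 ^ n * N r" using Npow[OF _ r0, of t1] t1 tt by simp
      also have "\<dots> \<le> exp (c * t1) ^ n * (M * exp (\<bar>\<omega>\<bar> * t1))"
      proof (rule mult_mono)
        show "N t1 ^ n \<le> exp (c * t1) ^ n" using Nt1 N0[of t1] t1 by (simp add: power_mono)
        have "\<omega> * r \<le> \<bar>\<omega>\<bar> * r" using r0 by (simp add: mult_right_mono)
        also have "\<dots> \<le> \<bar>\<omega>\<bar> * t1" using r1 by (simp add: mult_left_mono)
        finally have "\<omega> * r \<le> \<bar>\<omega>\<bar> * t1" .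
        then have "M * exp (\<omega> * r) \<le> M * exp (\<bar>\<omega>\<bar> * t1)" using M1 by simp
        then show "N r \<le> M * exp (\<bar>\<omega>\<bar> * t1)" using NM[OF r0] by linarith
        show "0 \<le> exp (c * t1) ^ n" by simp
        show "0 \<le> N r" using N0 r0 by simp
      qed
      also have "exp (c * t1) ^ n = exp (c * t - c * r)" unfolding tt by (simp add: exp_of_nat_mult[symmetric] algebra_simps)
      also have "\<dots> \<le> exp (c * t + \<bar>c\<bar> * t1)"
      proof -
        have "(- c) * r \<le> \<bar>c\<bar> * r" using r0 by (intro mult_right_mono) auto
        also have "\<dots> \<le> \<bar>c\<bar> * t1" using r1 by (simp add: mult_left_mono)
        finally have "- c * r \<le> \<bar>c\<bar> * t1" .
        then show ?thesis by simp
      qed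
      finally show ?thesis unfolding K_def using M1 by (simp add: exp_add algebra_simps)
    qed
    with Kpos show ?thesis by blast
  qed
  have Wle: "W \<le> ereal \<omega>" using LemL[of M \<omega>] M1 NM by simp
  have Fle_rel: "N t \<le> K * exp (c * t)" if "t \<ge> 0" "K \<ge> 0" "\<forall>q\<in>\<Gamma>. \<forall>t\<ge>0. \<forall>x. q (T t x) \<le> K * exp (c * t) * q x" for t K c
    using NC[of t "K * exp (c * t)"] that by simp
  have G: "growth_bound \<Gamma> T = W"
  proof (rule antisym)
    let ?S = "{ereal \<omega> | \<omega>. \<exists>M\<ge>1. \<forall>q\<in>\<Gamma>. \<forall>t\<ge>0. \<forall>x. q (T t x) \<le> M * exp (\<omega> * t) * q x}"
    have mem: "ereal z \<in> ?S" if Wz: "W < ereal z" for z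
    proof -
      obtain K where K: "K > 0" "\<forall>t\<ge>0. N t \<le> K * exp (z * t)" using LemU[OF Wz] by blast
      have "\<forall>q\<in>\<Gamma>. \<forall>t\<ge>0. \<forall>x. q (T t x) \<le> max 1 K * exp (z * t) * q x"
      proof (intro ballI allI impI)
        fix q and t :: real and x assume q: "q \<in> \<Gamma>" and t: "t \<ge> 0"
        have qx: "0 \<le> q x" using sn[OF q] unfolding seminorm_def by auto
        have "q (T t x) \<le> N t * q x" by (rule NA[OF t q])
        also have "\<dots> \<le> (max 1 K * exp (z * t)) * q x"
        proof (rule mult_right_mono[OF _ qx])
          have "K * exp (z * t) \<le> max 1 K * exp (z * t)" by (intro mult_right_mono) auto
          then show "N t \<le> max 1 K * exp (z * t)" using K t by (meson order_trans)
        qed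
        finally show "q (T t x) \<le> max 1 K * exp (z * t) * q x" .
      qed
      then show ?thesis by (intro CollectI exI[of _ z]) (auto intro!: exI[of _ "max 1 K"])
    qed
    show "growth_bound \<Gamma> T \<le> W"
    proof (rule ccontr)
      assume "\<not> growth_bound \<Gamma> T \<le> W"
      then obtain z where z: "W < ereal z" "ereal z < growth_bound \<Gamma> T" using ereal_dense2 by (metis not_le)
      have "growth_bound \<Gamma> T \<le> ereal z" unfolding growth_bound_def by (rule Inf_lower) (rule mem[OF z(1)])
      with z show False by simp
    qed
    show "W \<le> growth_bound \<Gamma> T" unfolding growth_bound_def
    proof (rule Inf_greatest)
      fix y assume "y \<in> ?S"
      then obtain z M' where y: "y = ereal z" and M': "M' \<ge> 1" "\<forall>q\<in>\<Gamma>. \<forall>t\<ge>0. \<forall>x. q (T t x) \<le> M' * exp (z * t) * q x"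
        by blast
      have "\<forall>t\<ge>0. N t \<le> M' * exp (z * t)" using Fle_rel M' by auto
      then show "W \<le> y" using LemL[of M' z] M' y by simp
    qed
  qed
  have Flam: "(\<lambda>t. ereal (1 / t) * eln (opnormG \<Gamma> (T t))) = F" by (simp add: F_def fun_eq_iff)
  have small: "\<forall>\<^sub>F t in at_top. ln K / t < e" if "e > 0" for K e :: real
  proof -
    have "((\<lambda>t. ln K / t) \<longlongrightarrow> 0) at_top"
      by (rule tendsto_divide_0[OF tendsto_const filterlim_at_top_imp_at_infinity[OF filterlim_ident]])
    then show ?thesis using that by (rule order_tendstoD(2))
  qed
  have pos_ev: "\<forall>\<^sub>F t in at_top. (t::real) > 0" by (rule eventually_gt_at_top)
  have lim: "(F \<longlongrightarrow> W) at_top"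
  proof (rule order_tendstoI)
    fix a assume aW: "a < W"
    show "\<forall>\<^sub>F t in at_top. a < F t" using pos_ev
      by eventually_elim (use WF aW in \<open>meson order_less_le_trans\<close>)
  next
    fix a assume "W < a"
    then obtain c where c: "W < ereal c" "ereal c < a" using ereal_dense2 by blast
    then obtain c' where c': "W < ereal c'" "ereal c' < ereal c" using ereal_dense2 by blast
    obtain K where K: "K > 0" "\<forall>t\<ge>0. N t \<le> K * exp (c' * t)" using LemU[OF c'(1)] by blast
    have "c - c' > 0" using c' by simp
    show "\<forall>\<^sub>F t in at_top. F t < a" using pos_ev small[OF \<open>c - c' > 0\<close>, of K]
    proof eventually_elim
      case (elim t)
      have "F t \<le> ereal (ln K / t + c')" using Fbound[OF elim(1) K(1)] K(2) elim(1) by simp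
      also have "\<dots> < ereal c" using elim(2) by simp
      finally show ?case using c(2) by simp
    qed
  qed
  have funpow: "T t0 ^^ n = T (real n * t0)" for n
  proof (induction n)
    case 0 then show ?case using T0 by simp
  next
    case (Suc n)
    have "T t0 ^^ Suc n = T t0 \<circ> T (real n * t0)" using Suc by simp
    also have "\<dots> = T (t0 + real n * t0)" using semi[of t0 "real n * t0"] t0 by simp
    finally show ?case by (simp add: algebra_simps)
  qed
  define s where "s n = ereal (root n (N (real n * t0)))" for n
  have seq: "eroot n (opnormG \<Gamma> (T t0 ^^ n)) = s n" for n
    unfolding funpow s_def eroot_def using Neq[of "real n * t0"] t0 by simp
  define L where "L = (if W = - \<infinity> then 0 else ereal (exp (t0 * real_of_ereal W)))"
  have Wfin: "W \<noteq> \<infinity>" using Wle by auto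
  have GL: "W = ereal (1 / t0) * eln L"
  proof (cases W)
    case (real w) then show ?thesis unfolding L_def eln_def using t0 by simp
  next
    case PInf with Wfin show ?thesis by simp
  next
    case MInf then show ?thesis unfolding L_def eln_def using t0 by simp
  qed
  have s0: "0 \<le> s n" for n unfolding s_def using N0[of "real n * t0"] t0 by (simp add: real_root_ge_zero)
  have conv: "s \<longlonglongrightarrow> L"
  proof (rule order_tendstoI)
    fix a assume aL: "a < L"
    show "\<forall>\<^sub>F n in sequentially. a < s n"
    proof (cases "a < 0")
      case True then show ?thesis using s0 by (intro always_eventually allI) (meson order_less_le_trans)
    next
      case False
      then have "W \<noteq> - \<infinity>" using aL unfolding L_def by auto
      with Wfin obtain w where w: "W = ereal w" by (cases W) auto
      from False aL obtain r where r: "a = ereal r" "0 \<le> r" "r < exp (t0 * w)"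
        unfolding L_def using w by (cases a) auto
      show ?thesis using eventually_gt_at_top[of "0::nat"]
      proof eventually_elim
        case (elim n)
        define t where "t = real n * t0"
        have tpos: "t > 0" unfolding t_def using elim t0 by simp
        have "ereal w \<le> F t" using WF[OF tpos] w by simp
        then have Nn: "N t \<noteq> 0" and lnN: "w \<le> ln (N t) / t" using Feq[OF tpos] by (auto split: if_splits)
        have Npos: "N t > 0" using Nn N0[of t] tpos by simp
        have "t * w \<le> ln (N t)" using lnN tpos by (simp add: field_simps)
        have "r ^ n < N t"
        proof (cases "r = 0")
          case True then show ?thesis using elim Npos by (simp add: power_0_left)
        next
          case False
          then have rpos: "r > 0" using r by simp
          have "ln r < t0 * w" using r rpos by (metis ln_exp ln_less_cancel_iff exp_gt_zero)
          then have "real n * ln r < real n * (t0 * w)" using elim by simp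
          also have "\<dots> = t * w" unfolding t_def by simp
          also have "\<dots> \<le> ln (N t)" by fact
          finally have "ln (r ^ n) < ln (N t)" using rpos by (simp add: ln_realpow)
          then show ?thesis using rpos Npos by simp
        qed
        then have "root n (r ^ n) < root n (N t)" using elim by simp
        then show ?case using r elim unfolding s_def t_def by (simp add: real_root_power_cancel)
      qed
    qed
  next
    fix a assume La: "L < a"
    show "\<forall>\<^sub>F n in sequentially. s n < a"
    proof (cases a)
      case PInf then show ?thesis unfolding s_def by simp
    next
      case MInf with La show ?thesis by simp
    next
      case (real r)
      have L0: "0 \<le> L" unfolding L_def by simp
      have "0 < a" using L0 La by (rule order_le_less_trans)
      then have rpos: "r > 0" using real by simp
      have Wr: "W < ereal (ln r / t0)"
      proof (cases W)
        case (real w)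
        then have "exp (t0 * w) < r" using La \<open>a = ereal r\<close> unfolding L_def by simp
        then have "t0 * w < ln r" using rpos by (metis ln_exp ln_less_cancel_iff exp_gt_zero)
        then show ?thesis using real t0 by (simp add: field_simps)
      qed (use Wfin in auto)
      have "\<forall>\<^sub>F t in at_top. F t < ereal (ln r / t0)" using order_tendstoD(2)[OF lim Wr] .
      then obtain T1 where T1: "\<And>t. t \<ge> T1 \<Longrightarrow> F t < ereal (ln r / t0)"
        by (auto simp: eventually_at_top_linorder)
      show ?thesis unfolding eventually_sequentially
      proof (intro exI[of _ "max 1 (nat \<lceil>T1 / t0\<rceil>)"] allI impI)
        fix n assume n: "max 1 (nat \<lceil>T1 / t0\<rceil>) \<le> n"
        define t where "t = real n * t0"
        have n1: "n > 0" using n by simp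
        have tpos: "t > 0" unfolding t_def using n1 t0 by simp
        have "T1 / t0 \<le> real n" using n by linarith
        then have "T1 \<le> t" unfolding t_def using t0 by (simp add: field_simps)
        then have Ft: "F t < ereal (ln r / t0)" by (rule T1)
        have "root n (N t) < r"
        proof (cases "N t = 0")
          case True then show ?thesis using rpos by simp
        next
          case False
          have Npos: "N t > 0" using False N0[of t] tpos by simp
          have "ln (N t) / t < ln r / t0" using Ft Feq[OF tpos] False by simp
          then have "ln (N t) < real n * ln r" using tpos t0 n1 unfolding t_def by (simp add: field_simps)
          then have "ln (N t) < ln (r ^ n)" using rpos by (simp add: ln_realpow)
          then have "N t < r ^ n" using rpos Npos by simp
          then have "root n (N t) < root n (r ^ n)" using n1 by simp
          then show ?thesis using rpos n1 by (simp add: real_root_power_cancel)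
        qed
        then show "s n < a" using real unfolding s_def t_def by simp
      qed
    qed
  qed
  show ?thesis unfolding Flam seq G W_def[symmetric]
    using lim conv GL by blast
qed

theorem proposition2p4:
  fixes p :: "nat \<Rightarrow> 'a::real_vector \<Rightarrow> real"
    and T :: "real \<Rightarrow> 'a \<Rightarrow> 'a"
    and \<Gamma> :: "('a \<Rightarrow> real) set"
    and \<omega> M t0 :: real
  assumes "frechet p"
    and "C0_semigroup p T"
    and "exp_equicontinuous p T"
    and "fundamental_system p \<Gamma>"
    and "M \<ge> 1"
    and "\<forall>q\<in>\<Gamma>. \<forall>t\<ge>0. \<forall>x. q (T t x) \<le> M * exp (\<omega> * t) * q x"
    and "t0 > 0"
  shows "growth_bound \<Gamma> T = (INF t\<in>{0<..}. ereal (1 / t) * eln (opnormG \<Gamma> (T t)))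
    \<and> ((\<lambda>t. ereal (1 / t) * eln (opnormG \<Gamma> (T t))) \<longlongrightarrow> growth_bound \<Gamma> T) at_top
    \<and> (\<exists>L. (\<lambda>n. eroot n (opnormG \<Gamma> (T t0 ^^ n))) \<longlonglongrightarrow> L
           \<and> growth_bound \<Gamma> T = ereal (1 / t0) * eln L)"
proof -
  from assms(2) have lin: "\<And>t. t \<ge> 0 \<Longrightarrow> linear (T t)"
    and T0: "T 0 = id"
    and semi: "\<And>t s. t \<ge> 0 \<Longrightarrow> s \<ge> 0 \<Longrightarrow> T (t + s) = T t \<circ> T s"
    unfolding C0_semigroup_def continuous_linear_def by auto
  from assms(4) have sn: "\<And>q. q \<in> \<Gamma> \<Longrightarrow> seminorm q"
    unfolding fundamental_system_def continuous_seminorm_def by auto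
  show ?thesis by (rule main_part[OF lin semi T0 sn assms(5,6,7)])
qed

end
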